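(* With the notation of the context, let $x^*\in\Delta$ satisfy $F(x^* )=\inf_{x\in\Delta}F(x)$. Then there exist $a^*,b^*,c^*\in(0,1)$ such that $x^*(\psi)=a^*$ for every $\psi$ of type 1, $x^*(\psi)=b^*$ for every $\psi$ of type 2, 3 or 5, and $x^*(\psi)=c^*$ for every $\psi$ of type 4.
   Context: Fix an integer $n\ge2$ and free generators $\xi_1,\dots,\xi_n$ of a free group; throughout $i,j,k\in\{1,\dots,n\}$ and $t,s,p\in\{-1,+1\}$. Let $\Psi$ be the set of reduced words $\xi_i^{2t}$; $\xi_i^t\xi_j^{2s}$ ($i\ne j$); $\xi_i^t\xi_j^s\xi_k^p$ ($i\ne j$, $j\ne k$). Types: type 1 $=\xi_i^{2t}$; type 2 $=\xi_i^t\xi_j^{2s}$; type 3 $=\xi_i^t\xi_j^s\xi_i^t$; type 4 $=\xi_i^t\xi_j^s\xi_i^{-t}$; type 5 $=\xi_i^t\xi_j^s\xi_k^p$ with $i,j,k$ pairwise distinct. For a letter $\xi_a^x$ let $S(\xi_a^x)\subset\Psi$ be the set of words in $\Psi$ beginning with $\xi_a^x$, namely $\{\xi_a^{2x}\}\cup\{\xi_a^x\xi_j^{2s}\}\cup\{\xi_a^x\xi_j^s\xi_k^p\}$; for $a\ne b$ let $S(\xi_a^x\xi_b^y)=\{\xi_a^x\xi_b^{2y}\}\cup\{\xi_a^x\xi_b^y\xi_k^p: k\ne b\}$. A relation $r$ is a pair $(\psi_r,\Psi_r)$ with $\psi_r\in\Psi$, $\Psi_r\subseteq\Psi$. Let $\mathcal{F}$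 be the collection of the following relations (indices $i_0\ne j_0$, in type 5a $i_0,j_0,k_0$ pairwise distinct, all signs arbitrary): 1a: $\psi_r=\xi_{i_0}^{2t_0}$, $\Psi_r=\Psi\setminus S(\xi_{i_0}^{t_0})$; 2b: $\psi_r=\xi_{i_0}^{t_0}\xi_{j_0}^{2s_0}$, $\Psi_r=\Psi\setminus S(\xi_{i_0}^{t_0}\xi_{j_0}^{s_0})$; 3a: $\psi_r=\xi_{i_0}^{t_0}\xi_{j_0}^{s_0}\xi_{i_0}^{t_0}$, $\Psi_r=\Psi\setminus S(\xi_{j_0}^{s_0}\xi_{i_0}^{t_0})$; 4b: $\psi_r=\xi_{i_0}^{t_0}\xi_{j_0}^{s_0}\xi_{i_0}^{-t_0}$, $\Psi_r=S(\xi_{i_0}^{t_0})$; 5a: $\psi_r=\xi_{i_0}^{t_0}\xi_{j_0}^{s_0}\xi_{k_0}^{p_0}$, $\Psi_r=\Psi\setminus S(\xi_{j_0}^{s_0}\xi_{k_0}^{p_0})$. Let $\Delta=\{x\in\mathbb{R}^\Psi: x(\psi)>0\ \forall\psi,\ \sum_{\psi}x(\psi)=1\}$. For a relation $r$ and $x\in\Delta$ put $x_r=x(\psi_r)$, $X_r=\sum_{\psi\in\Psi_r}x(\psi)$, $f_r(x)=\frac{1-x_r}{x_r}\cdot\frac{1-X_r}{X_r}$, and $F(x)=\max_{r\in\mathcal{F}}f_r(x)$. *)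

theory Defs
  imports Complex_Main
begin

text \<open>A letter xi_i^t is encoded as the pair (i, t) with i in {1..n} and t in {-1, 1}.
  A reduced word is encoded as the list of its letters; e.g. xi_i^{2t} is [(i,t),(i,t)].\<close>

type_synonym letter = "nat \<times> int"
type_synonym word = "letter list"

definition sgns :: "int set" where "sgns = {-1, 1}"

definition Psi :: "nat \<Rightarrow> word set" where
  "Psi n =
     {[(i,t),(i,t)] | i t. i \<in> {1..n} \<and> t \<in> sgns}
   \<union> {[(i,t),(j,s),(j,s)] | i j t s. i \<in> {1..n} \<and> j \<in> {1..n} \<and> i \<noteq> j \<and> t \<in> sgns \<and> s \<in> sgns}
   \<union> {[(i,t),(j,s),(k,p)] | i j k t s p. i \<in> {1..n} \<and> j \<in> {1..n} \<and> k \<in> {1..n}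
        \<and> i \<noteq> j \<and> j \<noteq> k \<and> t \<in> sgns \<and> s \<in> sgns \<and> p \<in> sgns}"

definition type1 :: "word \<Rightarrow> bool" where
  "type1 w \<longleftrightarrow> (\<exists>i t. w = [(i,t),(i,t)])"
definition type2 :: "word \<Rightarrow> bool" where
  "type2 w \<longleftrightarrow> (\<exists>i j t s. i \<noteq> j \<and> w = [(i,t),(j,s),(j,s)])"
definition type3 :: "word \<Rightarrow> bool" where
  "type3 w \<longleftrightarrow> (\<exists>i j t s. i \<noteq> j \<and> w = [(i,t),(j,s),(i,t)])"
definition type4 :: "word \<Rightarrow> bool" where
  "type4 w \<longleftrightarrow> (\<exists>i j t s. i \<noteq> j \<and> w = [(i,t),(j,s),(i,-t)])"
definition type5 :: "word \<Rightarrow> bool" where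
  "type5 w \<longleftrightarrow> (\<exists>i j k t s p. i \<noteq> j \<and> j \<noteq> k \<and> i \<noteq> k \<and> w = [(i,t),(j,s),(k,p)])"

definition S1 :: "nat \<Rightarrow> nat \<Rightarrow> int \<Rightarrow> word set" where
  "S1 n a x =
     {[(a,x),(a,x)]}
   \<union> {[(a,x),(j,s),(j,s)] | j s. j \<in> {1..n} \<and> j \<noteq> a \<and> s \<in> sgns}
   \<union> {[(a,x),(j,s),(k,p)] | j s k p. j \<in> {1..n} \<and> k \<in> {1..n} \<and> j \<noteq> a \<and> j \<noteq> k
        \<and> s \<in> sgns \<and> p \<in> sgns}"

definition S2 :: "nat \<Rightarrow> nat \<Rightarrow> int \<Rightarrow> nat \<Rightarrow> int \<Rightarrow> word set" where
  "S2 n a x b y =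
     {[(a,x),(b,y),(b,y)]}
   \<union> {[(a,x),(b,y),(k,p)] | k p. k \<in> {1..n} \<and> k \<noteq> b \<and> p \<in> sgns}"

definition rels :: "nat \<Rightarrow> (word \<times> word set) set" where
  "rels n =
     {([(i0,t0),(i0,t0)], Psi n - S1 n i0 t0) | i0 t0. i0 \<in> {1..n} \<and> t0 \<in> sgns}
   \<union> {([(i0,t0),(j0,s0),(j0,s0)], Psi n - S2 n i0 t0 j0 s0) | i0 j0 t0 s0.
        i0 \<in> {1..n} \<and> j0 \<in> {1..n} \<and> i0 \<noteq> j0 \<and> t0 \<in> sgns \<and> s0 \<in> sgns}
   \<union> {([(i0,t0),(j0,s0),(i0,t0)], Psi n - S2 n j0 s0 i0 t0) | i0 j0 t0 s0.
        i0 \<in> {1..n} \<and> j0 \<in> {1..n} \<and> i0 \<noteq> j0 \<and> t0 \<in> sgns \<and> s0 \<in> sgns}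
   \<union> {([(i0,t0),(j0,s0),(i0,-t0)], S1 n i0 t0) | i0 j0 t0 s0.
        i0 \<in> {1..n} \<and> j0 \<in> {1..n} \<and> i0 \<noteq> j0 \<and> t0 \<in> sgns \<and> s0 \<in> sgns}
   \<union> {([(i0,t0),(j0,s0),(k0,p0)], Psi n - S2 n j0 s0 k0 p0) | i0 j0 k0 t0 s0 p0.
        i0 \<in> {1..n} \<and> j0 \<in> {1..n} \<and> k0 \<in> {1..n} \<and> i0 \<noteq> j0 \<and> j0 \<noteq> k0 \<and> i0 \<noteq> k0
        \<and> t0 \<in> sgns \<and> s0 \<in> sgns \<and> p0 \<in> sgns}"

text \<open>The open simplex Delta (values of x outside Psi are irrelevant).\<close>
definition Delta :: "nat \<Rightarrow> (word \<Rightarrow> real) set" where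
  "Delta n = {x. (\<forall>\<psi>\<in>Psi n. x \<psi> > 0) \<and> (\<Sum>\<psi>\<in>Psi n. x \<psi>) = 1}"

definition frel :: "word \<times> word set \<Rightarrow> (word \<Rightarrow> real) \<Rightarrow> real" where
  "frel r x = (let xr = x (fst r); Xr = (\<Sum>\<psi>\<in>snd r. x \<psi>) in
               ((1 - xr) / xr) * ((1 - Xr) / Xr))"

definition FF :: "nat \<Rightarrow> (word \<Rightarrow> real) \<Rightarrow> real" where
  "FF n x = Max ((\<lambda>r. frel r x) ` rels n)"

end

theory Submission
  imports Defs
begin


definition LL :: "nat \<Rightarrow> letter set" where "LL n = {1..n} \<times> sgns"
definition Nb :: "nat \<Rightarrow> letter \<Rightarrow> letter set" where "Nb n l = {m \<in> LL n. fst m \<noteq> fst l}"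
definition linv :: "letter \<Rightarrow> letter" where "linv l = (fst l, - snd l)"
definition HH :: "real \<Rightarrow> real \<Rightarrow> real" where "HH M v = v / (v + M * (1 - v))"
definition Gf :: "real \<Rightarrow> real \<Rightarrow> real" where "Gf u X = ((1 - u) / u) * ((1 - X) / X)"

lemma sgns_simps: "t \<in> sgns \<longleftrightarrow> t = -1 \<or> t = 1" by (auto simp: sgns_def)
lemma finite_sgns: "finite sgns" by (simp add: sgns_def)
lemma card_sgns: "card sgns = 2" by (simp add: sgns_def)

lemma finite_LL: "finite (LL n)" by (simp add: LL_def finite_sgns)
lemma card_LL: "card (LL n) = 2 * n" by (simp add: LL_def card_cartesian_product card_sgns)
lemma finite_Nb: "finite (Nb n l)" using finite_LL by (simp add: Nb_def)
lemma Nb_eq: "Nb n l = ({1..n} - {fst l}) \<times> sgns" by (auto simp: Nb_def LL_def)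
lemma card_Nb: "l \<in> LL n \<Longrightarrow> card (Nb n l) = 2 * (n - 1)"
  by (auto simp: Nb_eq LL_def card_cartesian_product card_sgns)
lemma linv_in: "l \<in> LL n \<Longrightarrow> linv l \<in> LL n" by (auto simp: LL_def linv_def sgns_def)
lemma linv_Nb: "l \<in> LL n \<Longrightarrow> m \<in> Nb n l \<Longrightarrow> linv l \<in> Nb n m"
  by (auto simp: Nb_def linv_in) (auto simp: linv_def)
lemma Nb_sym: "m \<in> Nb n l \<Longrightarrow> l \<in> LL n \<Longrightarrow> l \<in> Nb n m" by (auto simp: Nb_def)

lemma S2_eq: "S2 n a x b y = insert [(a,x),(b,y),(b,y)] ((\<lambda>k. [(a,x),(b,y),k]) ` Nb n (b,y))"
  by (auto simp: S2_def Nb_def LL_def)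

lemma S1_eq: "S1 n a x = insert [(a,x),(a,x)] (\<Union>m\<in>Nb n (a,x). S2 n a x (fst m) (snd m))"
  by (auto simp: S1_def S2_def Nb_def LL_def)

lemma Psi_eq: "Psi n = (\<Union>l\<in>LL n. S1 n (fst l) (snd l))"
  by (auto simp: Psi_def S1_def LL_def)

lemma finite_S2: "finite (S2 n a x b y)" by (simp add: S2_eq finite_Nb)
lemma finite_S1: "finite (S1 n a x)" by (simp add: S1_eq finite_S2 finite_Nb)
lemma finite_Psi: "finite (Psi n)" by (simp add: Psi_eq finite_S1 finite_LL)

lemma sum_S2: "(\<Sum>w\<in>S2 n a x b y. f w) = f [(a,x),(b,y),(b,y)] + (\<Sum>k\<in>Nb n (b,y). f [(a,x),(b,y),k])"
proof -
  have "[(a,x),(b,y),(b,y)] \<notin> (\<lambda>k. [(a,x),(b,y),k]) ` Nb n (b,y)" by (auto simp: Nb_def)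
  moreover have "inj_on (\<lambda>k. [(a,x),(b,y),k]) (Nb n (b,y))" by (auto simp: inj_on_def)
  ultimately show ?thesis by (simp add: S2_eq finite_Nb sum.reindex)
qed

lemma sum_S1: "(\<Sum>w\<in>S1 n a x. f w) = f [(a,x),(a,x)] + (\<Sum>m\<in>Nb n (a,x). \<Sum>w\<in>S2 n a x (fst m) (snd m). f w)"
proof -
  have "[(a,x),(a,x)] \<notin> (\<Union>m\<in>Nb n (a,x). S2 n a x (fst m) (snd m))" by (auto simp: S2_def)
  moreover have "(\<Sum>w\<in>(\<Union>m\<in>Nb n (a,x). S2 n a x (fst m) (snd m)). f w) = (\<Sum>m\<in>Nb n (a,x). \<Sum>w\<in>S2 n a x (fst m) (snd m). f w)"
    apply (rule sum.UNION_disjoint)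
    apply (simp add: finite_Nb)
    apply (simp add: finite_S2)
    apply (auto simp: S2_def)
    done
  ultimately show ?thesis by (simp add: S1_eq finite_Nb finite_S2)
qed

lemma sum_Psi: "(\<Sum>w\<in>Psi n. f w) = (\<Sum>l\<in>LL n. \<Sum>w\<in>S1 n (fst l) (snd l). f w)"
  unfolding Psi_eq
  apply (rule sum.UNION_disjoint)
  apply (simp add: finite_LL)
  apply (simp add: finite_S1)
  apply (auto simp: S1_def)
  done

lemma S2_sub: "l \<in> LL n \<Longrightarrow> m \<in> Nb n l \<Longrightarrow> S2 n (fst l) (snd l) (fst m) (snd m) \<subseteq> Psi n"
  by (auto simp: S2_def Psi_def Nb_def LL_def)
lemma S1_sub: "l \<in> LL n \<Longrightarrow> S1 n (fst l) (snd l) \<subseteq> Psi n"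
  by (auto simp: Psi_eq)



lemma D_pos: "0 < (M::real) \<Longrightarrow> 0 \<le> u \<Longrightarrow> u \<le> 1 \<Longrightarrow> 0 < u + M*(1-u)"
proof -
  assume a: "0 < M" "0 \<le> u" "u \<le> 1"
  have "0 \<le> M*(1-u)" using a by simp
  show ?thesis proof (cases "u = 0")
    case True then show ?thesis using a by simp
  next
    case False then show ?thesis using a \<open>0 \<le> M*(1-u)\<close> by linarith
  qed
qed
lemma tang: fixes M u v :: real
  assumes du: "0 < u + M*(1-u)" and dv: "0 < v + M*(1-v)"
  shows "u / (u + M*(1-u)) - v / (v + M*(1-v)) - M / (v + M*(1-v))^2 * (u - v) = M*(M-1)*(u-v)^2 / ((u + M*(1-u)) * (v + M*(1-v))^2)"
proof -
  define a where "a = u + M*(1-u)"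
  define b where "b = v + M*(1-v)"
  have a0: "a \<noteq> 0" and b0: "b \<noteq> 0" using du dv a_def b_def by auto
  have "u / a - v / b - M / b^2 * (u - v) = (u*b^2 - v*a*b - M*(u-v)*a) / (a*b^2)"
    using a0 b0 by (simp add: field_simps power2_eq_square)
  also have "u*b^2 - v*a*b - M*(u-v)*a = M*(M-1)*(u-v)^2"
    unfolding a_def b_def by (simp add: power2_eq_square algebra_simps)
  finally show ?thesis unfolding a_def b_def .
qed

lemma frac_lt: assumes "0<b" "0<d" "a*d < c*(b::real)" shows "a/b < c/d"
proof -
  have e1: "a / b = (a*d)/(b*d)" using assms by simp
  have e2: "c / d = (c*b)/(b*d)" using assms by simp
  have "(a*d)/(b*d) < (c*b)/(b*d)" using assms by (intro divide_strict_right_mono) auto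
  then show ?thesis using e1 e2 by simp
qed

lemma Gf_le: assumes "0<u" "u<1" "0<X" "X<1" "0<M"
  shows "Gf u X \<le> M \<longleftrightarrow> HH M (1-X) \<le> u"
proof -
  have d: "0 < (1-X) + M * X" using assms by (simp add: add_pos_pos)
  have "Gf u X \<le> M \<longleftrightarrow> (1-u)*(1-X) \<le> M * (u * X)"
    using assms unfolding Gf_def by (simp add: field_simps)
  also have "\<dots> \<longleftrightarrow> (1-X) \<le> u * ((1-X) + M * X)" by (simp add: algebra_simps)
  also have "\<dots> \<longleftrightarrow> HH M (1-X) \<le> u" unfolding HH_def using d by (simp add: divide_le_eq mult.commute)
  finally show ?thesis .
qed

lemma Gf_less: assumes "0<u" "u<1" "0<X" "X<1" "0<M"
  shows "Gf u X < M \<longleftrightarrow> HH M (1-X) < u"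
proof -
  have d: "0 < (1-X) + M * X" using assms by (simp add: add_pos_pos)
  have "Gf u X < M \<longleftrightarrow> (1-u)*(1-X) < M * (u * X)"
    using assms unfolding Gf_def by (simp add: field_simps)
  also have "\<dots> \<longleftrightarrow> (1-X) < u * ((1-X) + M * X)" by (simp add: algebra_simps)
  also have "\<dots> \<longleftrightarrow> HH M (1-X) < u" unfolding HH_def using d by (simp add: divide_less_eq mult.commute)
  finally show ?thesis .
qed

lemma Gf_pos: "0<u \<Longrightarrow> u<1 \<Longrightarrow> 0<X \<Longrightarrow> X<1 \<Longrightarrow> 0 < Gf u X"
  by (simp add: Gf_def)

lemma HH_less: assumes "0 < M" "0 \<le> v" "v < w" "w \<le> 1" shows "HH M v < HH M w"
proof -
  have d1: "0 < v + M*(1-v)" using assms by (intro D_pos) auto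
  have d2: "0 < w + M*(1-w)" using assms by (intro D_pos) auto
  have "M * (v - w) < 0" using assms by (simp add: mult_pos_neg)
  then have "v * (w + M*(1-w)) < w * (v + M*(1-v))" by (simp add: algebra_simps)
  then show ?thesis unfolding HH_def by (rule frac_lt[OF d1 d2])
qed

lemma HH_pos: "0 < M \<Longrightarrow> 0 < v \<Longrightarrow> v < 1 \<Longrightarrow> 0 < HH M v"
  unfolding HH_def by (simp add: add_pos_pos)

lemma HH_lt1: "0 < M \<Longrightarrow> 0 < v \<Longrightarrow> v < 1 \<Longrightarrow> HH M v < 1"
  unfolding HH_def by (simp add: add_pos_pos)

lemma HH_ge_self: assumes "0 < M" "M \<le> 1" "0 < v" "v < 1" shows "v \<le> HH M v"
proof -
  have d: "0 < v + M*(1-v)" using assms by (intro D_pos) auto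
  have "M*(1-v) \<le> 1*(1-v)" using assms by (intro mult_right_mono) auto
  then have "v + M*(1-v) \<le> 1" by simp
  then have "v * (v + M*(1-v)) \<le> v * 1" using assms by (intro mult_left_mono) auto
  then show ?thesis unfolding HH_def using d by (simp add: le_divide_eq)
qed

lemma HH_tangent: assumes "1 < M" "0 \<le> u" "u \<le> 1" "0 < v" "v < 1"
  shows "HH M u - HH M v - M / (v + M*(1-v))^2 * (u - v) = M*(M-1)*(u-v)^2 / ((u + M*(1-u)) * (v + M*(1-v))^2)"
proof -
  have du: "0 < u + M*(1-u)" using assms by (intro D_pos) auto
  have dv: "0 < v + M*(1-v)" using assms by (intro D_pos) auto
  show ?thesis unfolding HH_def by (rule tang[OF du dv])
qed

lemma HH_tangent_ge: assumes "1 < M" "0 \<le> u" "u \<le> 1" "0 < v" "v < 1"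
  shows "HH M v + M / (v + M*(1-v))^2 * (u - v) \<le> HH M u"
    and "HH M u \<le> HH M v + M / (v + M*(1-v))^2 * (u - v) \<Longrightarrow> u = v"
proof -
  have du: "0 < u + M*(1-u)" using assms by (intro D_pos) auto
  have dv: "0 < v + M*(1-v)" using assms by (intro D_pos) auto
  have e: "HH M u - HH M v - M / (v + M*(1-v))^2 * (u - v) = M*(M-1)*(u-v)^2 / ((u + M*(1-u)) * (v + M*(1-v))^2)"
    by (rule HH_tangent[OF assms])
  have "0 \<le> M*(M-1)*(u-v)^2 / ((u + M*(1-u)) * (v + M*(1-v))^2)"
    using assms du dv by simp
  then show "HH M v + M / (v + M*(1-v))^2 * (u - v) \<le> HH M u" using e by linarith
  assume "HH M u \<le> HH M v + M / (v + M*(1-v))^2 * (u - v)"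
  then have "M*(M-1)*(u-v)^2 / ((u + M*(1-u)) * (v + M*(1-v))^2) \<le> 0" using e by linarith
  moreover have p: "0 < (u + M*(1-u)) * (v + M*(1-v))^2" using du dv by simp
  ultimately have "M*(M-1)*(u-v)^2 \<le> 0" by (simp add: pos_divide_le_eq)
  then have "(u-v)^2 \<le> 0" using assms by (simp add: mult_le_0_iff)
  then show "u = v" by simp
qed

lemma jensen_HH:
  assumes fin: "finite I" and M: "1 < M" and u: "\<And>i. i \<in> I \<Longrightarrow> 0 \<le> u i \<and> u i \<le> 1"
    and v: "0 < v" "v < 1" and s: "(\<Sum>i\<in>I. u i) = real (card I) * v"
  shows "real (card I) * HH M v \<le> (\<Sum>i\<in>I. HH M (u i))"
    and "(\<Sum>i\<in>I. HH M (u i)) \<le> real (card I) * HH M v \<Longrightarrow> \<forall>i\<in>I. u i = v"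
proof -
  define K where "K = M / (v + M*(1-v))^2"
  have t: "\<And>i. i \<in> I \<Longrightarrow> HH M v + K * (u i - v) \<le> HH M (u i)"
    unfolding K_def using HH_tangent_ge(1)[OF M _ _ v] u by blast
  have t2: "\<And>i. i \<in> I \<Longrightarrow> HH M (u i) \<le> HH M v + K * (u i - v) \<Longrightarrow> u i = v"
    unfolding K_def using HH_tangent_ge(2)[OF M _ _ v] u by blast
  have s0: "(\<Sum>i\<in>I. u i - v) = 0"
    using s by (simp only: sum_subtractf) simp
  have "(\<Sum>i\<in>I. HH M v + K * (u i - v)) = (\<Sum>i\<in>I. HH M v) + K * (\<Sum>i\<in>I. u i - v)"
    by (simp only: sum.distrib sum_distrib_left)
  then have sK: "(\<Sum>i\<in>I. HH M v + K * (u i - v)) = real (card I) * HH M v"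
    using s0 by simp
  show "real (card I) * HH M v \<le> (\<Sum>i\<in>I. HH M (u i))"
    using sum_mono[of I "\<lambda>i. HH M v + K * (u i - v)" "\<lambda>i. HH M (u i)", OF t] sK by simp
  assume le: "(\<Sum>i\<in>I. HH M (u i)) \<le> real (card I) * HH M v"
  have nn: "\<And>i. i \<in> I \<Longrightarrow> 0 \<le> HH M (u i) - (HH M v + K * (u i - v))" using t by auto
  have z: "(\<Sum>i\<in>I. HH M (u i) - (HH M v + K * (u i - v))) = 0"
  proof -
    have "(\<Sum>i\<in>I. HH M (u i) - (HH M v + K * (u i - v))) = (\<Sum>i\<in>I. HH M (u i)) - (\<Sum>i\<in>I. HH M v + K * (u i - v))"
      by (simp only: sum_subtractf)
    moreover have "0 \<le> (\<Sum>i\<in>I. HH M (u i) - (HH M v + K * (u i - v)))"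
      using nn by (simp add: sum_nonneg)
    ultimately show ?thesis using le sK by linarith
  qed
  have iff: "(\<Sum>i\<in>I. HH M (u i) - (HH M v + K * (u i - v))) = 0 \<longleftrightarrow> (\<forall>i\<in>I. HH M (u i) - (HH M v + K * (u i - v)) = 0)"
    by (rule sum_nonneg_eq_0_iff[OF fin nn])
  have "\<forall>i\<in>I. HH M (u i) - (HH M v + K * (u i - v)) = 0"
    using iff z by blast
  then show "\<forall>i\<in>I. u i = v"
  proof (intro ballI)
    fix i assume i: "i \<in> I"
    have "HH M (u i) - (HH M v + K * (u i - v)) = 0" using \<open>\<forall>i\<in>I. _ = 0\<close> i by blast
    then have "HH M (u i) \<le> HH M v + K * (u i - v)" by linarith
    then show "u i = v" by (rule t2[OF i])
  qed
qed



definition s1 :: "nat \<Rightarrow> (word \<Rightarrow> real) \<Rightarrow> letter \<Rightarrow> real" where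
  "s1 n x l = (\<Sum>w\<in>S1 n (fst l) (snd l). x w)"
definition t2 :: "nat \<Rightarrow> (word \<Rightarrow> real) \<Rightarrow> letter \<Rightarrow> letter \<Rightarrow> real" where
  "t2 n x l m = (\<Sum>w\<in>S2 n (fst l) (snd l) (fst m) (snd m). x w)"

lemma t2_exp: "t2 n x l m = x [l,m,m] + (\<Sum>k\<in>Nb n m. x [l,m,k])"
  unfolding t2_def sum_S2 by simp

lemma s1_exp: "s1 n x l = x [l,l] + (\<Sum>m\<in>Nb n l. t2 n x l m)"
  unfolding s1_def t2_def sum_S1 by simp

lemma sum_Psi_s1: "(\<Sum>w\<in>Psi n. x w) = (\<Sum>l\<in>LL n. s1 n x l)"
  unfolding s1_def by (rule sum_Psi)

lemma w1_Psi: "l \<in> LL n \<Longrightarrow> [l,l] \<in> Psi n"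
  by (cases l) (auto simp: Psi_def LL_def)
lemma w2_Psi: "l \<in> LL n \<Longrightarrow> m \<in> Nb n l \<Longrightarrow> [l,m,m] \<in> Psi n"
  by (cases l, cases m) (auto simp: Psi_def LL_def Nb_def)
lemma w3_Psi: "l \<in> LL n \<Longrightarrow> m \<in> Nb n l \<Longrightarrow> k \<in> Nb n m \<Longrightarrow> [l,m,k] \<in> Psi n"
  by (cases l, cases m, cases k) (auto simp: Psi_def LL_def Nb_def)

lemma Nb_LL: "m \<in> Nb n l \<Longrightarrow> m \<in> LL n" by (simp add: Nb_def)

lemma linv_neq: "l \<in> LL n \<Longrightarrow> linv l \<noteq> l"
  by (cases l) (auto simp: linv_def LL_def sgns_def)
lemma linv_linv: "linv (linv l) = l" by (simp add: linv_def)

lemma frel_eq: "frel (w, W) x = Gf (x w) (\<Sum>v\<in>W. x v)"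
  by (simp add: frel_def Gf_def Let_def)

lemma sgns_neg: "t \<in> sgns \<Longrightarrow> - t \<in> sgns" by (auto simp: sgns_def)
lemma Psi_m1: "i \<in> {1..n} \<Longrightarrow> t \<in> sgns \<Longrightarrow> [(i,t),(i,t)] \<in> Psi n"
  by (auto simp: Psi_def)
lemma Psi_m2: "i \<in> {1..n} \<Longrightarrow> t \<in> sgns \<Longrightarrow> j \<in> {1..n} \<Longrightarrow> s \<in> sgns \<Longrightarrow> i \<noteq> j \<Longrightarrow> [(i,t),(j,s),(j,s)] \<in> Psi n"
  by (auto simp: Psi_def)
lemma Psi_m3: "i \<in> {1..n} \<Longrightarrow> t \<in> sgns \<Longrightarrow> j \<in> {1..n} \<Longrightarrow> s \<in> sgns \<Longrightarrow> k \<in> {1..n} \<Longrightarrow> p \<in> sgns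
   \<Longrightarrow> i \<noteq> j \<Longrightarrow> j \<noteq> k \<Longrightarrow> [(i,t),(j,s),(k,p)] \<in> Psi n"
  unfolding Psi_def by blast
lemma S1_sub': "a \<in> {1..n} \<Longrightarrow> x \<in> sgns \<Longrightarrow> S1 n a x \<subseteq> Psi n"
  using S1_sub[of "(a,x)" n] by (simp add: LL_def)

lemma S1_mem: "w \<in> S1 n a x \<Longrightarrow> Suc 0 \<le> a \<Longrightarrow> a \<le> n \<Longrightarrow> x \<in> sgns \<Longrightarrow> w \<in> Psi n"
  using S1_sub'[of a n x] by auto

lemma rels_sub: "rels n \<subseteq> Psi n \<times> Pow (Psi n)"
  unfolding rels_def
  apply (intro Un_least)
  apply (auto intro: Psi_m1)[1]
  apply (auto intro: Psi_m2)[1]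
  apply (auto intro: Psi_m3)[1]
  apply (auto intro: Psi_m3 sgns_neg S1_mem)[1]
  apply (auto intro: Psi_m3)[1]
  done

lemma finite_rels: "finite (rels n)"
  using rels_sub finite_Psi by (meson finite_Pow_iff finite_SigmaI finite_subset)

lemma r1: "l \<in> LL n \<Longrightarrow> ([l,l], Psi n - S1 n (fst l) (snd l)) \<in> rels n"
  by (cases l) (auto simp: rels_def LL_def)
lemma r4: "l \<in> LL n \<Longrightarrow> m \<in> Nb n l \<Longrightarrow> ([l,m,linv l], S1 n (fst l) (snd l)) \<in> rels n"
  by (cases l, cases m) (auto simp: rels_def LL_def Nb_def linv_def)
lemma r2: "l \<in> LL n \<Longrightarrow> m \<in> Nb n l \<Longrightarrow> ([l,m,m], Psi n - S2 n (fst l) (snd l) (fst m) (snd m)) \<in> rels n"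
  by (cases l, cases m) (auto simp: rels_def LL_def Nb_def)
lemma r35: assumes "l \<in> LL n" "m \<in> Nb n l" "k \<in> Nb n m" "k \<noteq> linv l"
  shows "([l,m,k], Psi n - S2 n (fst m) (snd m) (fst k) (snd k)) \<in> rels n"
proof (cases "fst k = fst l")
  case True
  then have "k = l" using assms by (cases k, cases l) (auto simp: linv_def Nb_def LL_def sgns_def)
  then show ?thesis using assms by (cases l, cases m) (auto simp: rels_def LL_def Nb_def)
next
  case False
  then show ?thesis using assms by (cases l, cases m, cases k) (auto simp: rels_def LL_def Nb_def)
qed



lemma Dl_pos: "x \<in> Delta n \<Longrightarrow> w \<in> Psi n \<Longrightarrow> 0 < x w" by (simp add: Delta_def)
lemma D_tot: "x \<in> Delta n \<Longrightarrow> (\<Sum>w\<in>Psi n. x w) = 1" by (simp add: Delta_def)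
lemma D_tot_s1: "x \<in> Delta n \<Longrightarrow> (\<Sum>l\<in>LL n. s1 n x l) = 1" using D_tot sum_Psi_s1 by metis

lemma t2_pos: assumes "x \<in> Delta n" "l \<in> LL n" "m \<in> Nb n l" shows "0 < t2 n x l m"
proof -
  have "0 < x [l,m,m]" using assms by (intro Dl_pos w2_Psi)
  moreover have "0 \<le> (\<Sum>k\<in>Nb n m. x [l,m,k])"
    using assms by (intro sum_nonneg less_imp_le Dl_pos w3_Psi) auto
  ultimately show ?thesis by (simp add: t2_exp)
qed

lemma s1_pos: assumes "x \<in> Delta n" "l \<in> LL n" shows "0 < s1 n x l"
proof -
  have "0 < x [l,l]" using assms by (intro Dl_pos w1_Psi)
  moreover have "0 \<le> (\<Sum>m\<in>Nb n l. t2 n x l m)"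
    using assms by (intro sum_nonneg less_imp_le t2_pos) auto
  ultimately show ?thesis by (simp add: s1_exp)
qed

lemma s1_lt1: assumes "x \<in> Delta n" "l \<in> LL n" shows "s1 n x l < 1"
proof -
  have "(\<Sum>l'\<in>{l, linv l}. s1 n x l') \<le> (\<Sum>l'\<in>LL n. s1 n x l')"
    using assms by (intro sum_mono2 finite_LL) (auto simp: linv_in intro: less_imp_le s1_pos)
  moreover have "(\<Sum>l'\<in>{l, linv l}. s1 n x l') = s1 n x l + s1 n x (linv l)"
    using linv_neq[OF assms(2)] by simp
  moreover have "0 < s1 n x (linv l)" using assms by (intro s1_pos linv_in)
  ultimately show ?thesis using D_tot_s1[OF assms(1)] by linarith
qed

lemma t2_lt1: assumes "x \<in> Delta n" "l \<in> LL n" "m \<in> Nb n l" shows "t2 n x l m < 1"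
proof -
  have "t2 n x l m \<le> (\<Sum>m\<in>Nb n l. t2 n x l m)"
    using assms by (intro member_le_sum finite_Nb less_imp_le t2_pos) auto
  moreover have "0 < x [l,l]" using assms by (intro Dl_pos w1_Psi)
  ultimately show ?thesis using s1_lt1[OF assms(1,2)] by (simp add: s1_exp)
qed

lemma one_LL: "1 \<le> n \<Longrightarrow> (1::nat, 1::int) \<in> LL n" by (simp add: LL_def sgns_def)
lemma onem_LL: "1 \<le> n \<Longrightarrow> (1::nat, -1::int) \<in> LL n" by (simp add: LL_def sgns_def)
lemma two_Nb: "2 \<le> n \<Longrightarrow> (2::nat, 1::int) \<in> Nb n (1,1)" by (simp add: Nb_def LL_def sgns_def)

lemma word_lt1: assumes "x \<in> Delta n" "1 \<le> n" "w \<in> Psi n" shows "x w < 1"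
proof -
  define w' where "w' = (if w = [(1,1),(1,1)] then [(1,-1),(1,-1)] else [(1::nat,1::int),(1,1)])"
  have w'P: "w' \<in> Psi n" unfolding w'_def using w1_Psi[OF one_LL[OF assms(2)]] w1_Psi[OF onem_LL[OF assms(2)]] by auto
  have ne: "w' \<noteq> w" unfolding w'_def by auto
  have "(\<Sum>v\<in>{w, w'}. x v) \<le> (\<Sum>v\<in>Psi n. x v)"
    using assms w'P by (intro sum_mono2 finite_Psi) (auto intro: less_imp_le Dl_pos)
  then have "x w + x w' \<le> 1" using ne D_tot[OF assms(1)] by simp
  moreover have "0 < x w'" using assms w'P by (intro Dl_pos)
  ultimately show ?thesis by linarith
qed

lemma three_le: assumes "x \<in> Delta n" "a \<in> Psi n" "b \<in> Psi n" "c \<in> Psi n" "a \<noteq> b" "a \<noteq> c" "b \<noteq> c"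
  shows "x a + x b + x c \<le> 1"
proof -
  have "(\<Sum>v\<in>{a, b, c}. x v) \<le> (\<Sum>v\<in>Psi n. x v)"
    using assms by (intro sum_mono2 finite_Psi) (auto intro: less_imp_le Dl_pos)
  then show ?thesis using assms D_tot[OF assms(1)] by simp
qed

lemma FF_ge: "r \<in> rels n \<Longrightarrow> frel r x \<le> FF n x"
  unfolding FF_def by (rule Max_ge) (auto simp: finite_rels)

lemma sum_Psi_diff: fixes x :: "word \<Rightarrow> real" shows "S \<subseteq> Psi n \<Longrightarrow> (\<Sum>w\<in>Psi n - S. x w) = (\<Sum>w\<in>Psi n. x w) - (\<Sum>w\<in>S. x w)"
  by (rule sum_diff[OF finite_Psi])

lemma frel1: assumes "x \<in> Delta n" "l \<in> LL n"
  shows "frel ([l,l], Psi n - S1 n (fst l) (snd l)) x = Gf (x [l,l]) (1 - s1 n x l)"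
  using assms by (simp add: frel_eq sum_Psi_diff S1_sub D_tot s1_def)
lemma frel4: "frel ([l,m,linv l], S1 n (fst l) (snd l)) x = Gf (x [l,m,linv l]) (s1 n x l)"
  by (simp add: frel_eq s1_def)
lemma frel2: assumes "x \<in> Delta n" "l \<in> LL n" "m \<in> Nb n l"
  shows "frel (w, Psi n - S2 n (fst l) (snd l) (fst m) (snd m)) x = Gf (x w) (1 - t2 n x l m)"
  using assms by (simp add: frel_eq sum_Psi_diff S2_sub D_tot t2_def)

lemma FF_pos: assumes "x \<in> Delta n" "1 \<le> n" shows "0 < FF n x"
proof -
  have l: "(1,1) \<in> LL n" using one_LL[OF assms(2)] .
  have w: "[(1,1),(1,1)] \<in> Psi n" using w1_Psi[OF l] .
  have "0 < Gf (x [(1,1),(1,1)]) (1 - s1 n x (1,1))"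
    using s1_pos[OF assms(1) l] s1_lt1[OF assms(1) l] Dl_pos[OF assms(1) w] word_lt1[OF assms w]
    by (intro Gf_pos) auto
  also have "\<dots> \<le> FF n x" using FF_ge[OF r1[OF l], of x] frel1[OF assms(1) l] by simp
  finally show ?thesis .
qed

lemma L1: assumes "x \<in> Delta n" "1 \<le> n" "l \<in> LL n" shows "HH (FF n x) (s1 n x l) \<le> x [l,l]"
proof -
  have "Gf (x [l,l]) (1 - s1 n x l) \<le> FF n x" using FF_ge[OF r1[OF assms(3)], of x] frel1[OF assms(1,3)] by simp
  moreover have "0 < x [l,l]" "x [l,l] < 1" using assms w1_Psi Dl_pos word_lt1 by auto
  moreover have "0 < s1 n x l" "s1 n x l < 1" using assms s1_pos s1_lt1 by auto
  ultimately show ?thesis using Gf_le[of "x [l,l]" "1 - s1 n x l" "FF n x"] FF_pos[OF assms(1,2)] by simp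
qed

lemma L4: assumes "x \<in> Delta n" "1 \<le> n" "l \<in> LL n" "m \<in> Nb n l" shows "HH (FF n x) (1 - s1 n x l) \<le> x [l,m,linv l]"
proof -
  have w: "[l,m,linv l] \<in> Psi n" using assms by (intro w3_Psi linv_Nb)
  have "Gf (x [l,m,linv l]) (s1 n x l) \<le> FF n x" using FF_ge[OF r4[OF assms(3,4)], of x] frel4 by simp
  moreover have "0 < x [l,m,linv l]" "x [l,m,linv l] < 1" using assms w Dl_pos word_lt1 by auto
  moreover have "0 < s1 n x l" "s1 n x l < 1" using assms s1_pos s1_lt1 by auto
  ultimately show ?thesis using Gf_le[of "x [l,m,linv l]" "s1 n x l" "FF n x"] FF_pos[OF assms(1,2)] by simp
qed

lemma L2: assumes "x \<in> Delta n" "1 \<le> n" "l \<in> LL n" "m \<in> Nb n l" shows "HH (FF n x) (t2 n x l m) \<le> x [l,m,m]"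
proof -
  have w: "[l,m,m] \<in> Psi n" using assms by (intro w2_Psi)
  have "Gf (x [l,m,m]) (1 - t2 n x l m) \<le> FF n x" using FF_ge[OF r2[OF assms(3,4)], of x] frel2[OF assms(1,3,4)] by simp
  moreover have "0 < x [l,m,m]" "x [l,m,m] < 1" using assms w Dl_pos word_lt1 by auto
  moreover have "0 < t2 n x l m" "t2 n x l m < 1" using assms t2_pos t2_lt1 by auto
  ultimately show ?thesis using Gf_le[of "x [l,m,m]" "1 - t2 n x l m" "FF n x"] FF_pos[OF assms(1,2)] by simp
qed

lemma L35: assumes "x \<in> Delta n" "1 \<le> n" "l \<in> LL n" "m \<in> Nb n l" "k \<in> Nb n m" "k \<noteq> linv l"
  shows "HH (FF n x) (t2 n x m k) \<le> x [l,m,k]"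
proof -
  have w: "[l,m,k] \<in> Psi n" using assms by (intro w3_Psi)
  have mL: "m \<in> LL n" using assms Nb_LL by auto
  have "Gf (x [l,m,k]) (1 - t2 n x m k) \<le> FF n x" using FF_ge[OF r35[OF assms(3-6)], of x] frel2[OF assms(1) mL assms(5)] by simp
  moreover have "0 < x [l,m,k]" "x [l,m,k] < 1" using assms w Dl_pos word_lt1 by auto
  moreover have "0 < t2 n x m k" "t2 n x m k < 1" using assms mL t2_pos t2_lt1 by auto
  ultimately show ?thesis using Gf_le[of "x [l,m,k]" "1 - t2 n x m k" "FF n x"] FF_pos[OF assms(1,2)] by simp
qed

lemma M_gt1: assumes "x \<in> Delta n" "2 \<le> n" shows "1 < FF n x"
proof (rule ccontr)
  assume "\<not> 1 < FF n x"
  then have M1: "FF n x \<le> 1" by simp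
  have n1: "1 \<le> n" using assms by simp
  define l where "l = (1::nat, 1::int)"
  define m where "m = (2::nat, 1::int)"
  have lL: "l \<in> LL n" unfolding l_def using one_LL[OF n1] .
  have mN: "m \<in> Nb n l" unfolding l_def m_def using two_Nb[OF assms(2)] .
  have Mp: "0 < FF n x" using FF_pos[OF assms(1) n1] .
  have "s1 n x l \<le> HH (FF n x) (s1 n x l)"
    using HH_ge_self[OF Mp M1] s1_pos[OF assms(1) lL] s1_lt1[OF assms(1) lL] by simp
  also have "\<dots> \<le> x [l,l]" using L1[OF assms(1) n1 lL] .
  finally have a: "s1 n x l \<le> x [l,l]" .
  have "1 - s1 n x l \<le> HH (FF n x) (1 - s1 n x l)"
    using HH_ge_self[OF Mp M1] s1_pos[OF assms(1) lL] s1_lt1[OF assms(1) lL] by simp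
  also have "\<dots> \<le> x [l,m,linv l]" using L4[OF assms(1) n1 lL mN] .
  finally have b: "1 - s1 n x l \<le> x [l,m,linv l]" .
  have "x [l,l] + x [l,m,linv l] + x [l,m,m] \<le> 1"
    using lL mN by (intro three_le[OF assms(1)] w1_Psi w2_Psi w3_Psi linv_Nb) (auto simp: l_def m_def linv_def)
  moreover have "0 < x [l,m,m]" using lL mN assms by (intro Dl_pos w2_Psi)
  ultimately show False using a b by linarith
qed



lemma ty1_2: "type1 [a,b] \<longleftrightarrow> a = b" by (cases a, cases b) (auto simp: type1_def)
lemma ty1_3: "\<not> type1 [a,b,c]" by (simp add: type1_def)
lemma ty4_2: "\<not> type4 [a,b]" by (simp add: type4_def)
lemma ty4_3: "type4 [l,m,k] \<longleftrightarrow> fst l \<noteq> fst m \<and> k = linv l"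
  by (cases l, cases m, cases k) (auto simp: type4_def linv_def)

lemma card_Nb_real: "l \<in> LL n \<Longrightarrow> 1 \<le> n \<Longrightarrow> real (card (Nb n l)) = 2 * real n - 2"
  using card_Nb[of l n] by (simp add: of_nat_diff)

lemma competitor:
  fixes n :: nat and M \<alpha> \<gamma> \<beta> :: real
  assumes n2: "2 \<le> n" and M: "0 < M" and pos: "0 < \<alpha>" "0 < \<gamma>" "0 < \<beta>"
    and con: "2 * real n * (\<alpha> + (2 * real n - 2) * (\<gamma> + (2 * real n - 2) * \<beta>)) = 1"
    and c1: "HH M (1 / (2 * real n)) < \<alpha>" and c4: "HH M (1 - 1 / (2 * real n)) < \<gamma>"
    and c5: "HH M (\<gamma> + (2 * real n - 2) * \<beta>) < \<beta>"
  shows "\<exists>y\<in>Delta n. FF n y < M"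
proof -
  define c where "c = 2 * real n"
  define d where "d = 2 * real n - 2"
  define t where "t = \<gamma> + d * \<beta>"
  define y where "y = (\<lambda>\<psi>::word. if type1 \<psi> then \<alpha> else if type4 \<psi> then \<gamma> else \<beta>)"
  have n1: "1 \<le> n" using n2 by simp
  have c4': "4 \<le> c" and d2: "2 \<le> d" using n2 by (simp_all add: c_def d_def)
  have con': "c * (\<alpha> + d * t) = 1" using con by (simp add: c_def d_def t_def)
  have tpos: "0 < t" using pos d2 by (simp add: t_def add_pos_pos)
  have cdtp: "0 < c * (d * t)" using c4' d2 tpos by simp
  have ca: "c * \<alpha> < 1" using con' cdtp by (simp add: algebra_simps)
  have a1: "\<alpha> < 1" using ca c4' pos by (smt (verit) mult_less_cancel_right1 mult_le_cancel_right1)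
  have cap: "0 < c * \<alpha>" using pos c4' by simp
  have cdt: "c * d * t < 1" using con' cap by (simp add: algebra_simps)
  have t1: "t < 1"
  proof -
    have "1 * 1 \<le> c * d" using c4' d2 by (intro mult_mono) auto
    then have "1 * t \<le> (c*d) * t" using tpos by (intro mult_right_mono) auto
    then show ?thesis using cdt by simp
  qed
  have g1: "\<gamma> < 1" using t1 pos d2 by (simp add: t_def) (smt (verit) mult_nonneg_nonneg)
  have b1: "\<beta> < 1"
  proof -
    have "1 * \<beta> \<le> d * \<beta>" using d2 pos by (intro mult_right_mono) auto
    then have "\<beta> \<le> d * \<beta>" by simp
    then show ?thesis using t1 pos unfolding t_def by linarith
  qed
  have yll: "y [l,l] = \<alpha>" for l by (simp add: y_def ty1_2)
  have ylmk: "y [l,m,k] = (if fst l \<noteq> fst m \<and> k = linv l then \<gamma> else \<beta>)" for l m k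
    by (simp add: y_def ty1_3 ty4_3)
  have ylmm: "l \<in> LL n \<Longrightarrow> m \<in> Nb n l \<Longrightarrow> y [l,m,m] = \<beta>" for l m
    by (simp add: ylmk linv_def Nb_def) (auto)
  have t2y: "t2 n y l m = t" if l: "l \<in> LL n" and m: "m \<in> Nb n l" for l m
  proof -
    have mL: "m \<in> LL n" using m Nb_LL by auto
    have li: "linv l \<in> Nb n m" using linv_Nb[OF l m] .
    have fm: "fst l \<noteq> fst m" using m by (simp add: Nb_def)
    have "(\<Sum>k\<in>Nb n m. y [l,m,k]) = y [l,m,linv l] + (\<Sum>k\<in>Nb n m - {linv l}. y [l,m,k])"
      by (rule sum.remove[OF finite_Nb li])
    also have "(\<Sum>k\<in>Nb n m - {linv l}. y [l,m,k]) = (\<Sum>k\<in>Nb n m - {linv l}. \<beta>)"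
      by (rule sum.cong) (auto simp: ylmk)
    also have "\<dots> = (d - 1) * \<beta>"
    proof -
      have cpos: "1 \<le> card (Nb n m)" using li finite_Nb[of n m] by (metis One_nat_def Suc_leI card_gt_0_iff empty_iff)
      have "real (card (Nb n m - {linv l})) = d - 1"
        using card_Nb_real[OF mL n1] li cpos by (simp add: card_Diff_singleton of_nat_diff d_def)
      then show ?thesis by simp
    qed
    finally have "(\<Sum>k\<in>Nb n m. y [l,m,k]) = \<gamma> + (d - 1) * \<beta>" using fm by (simp add: ylmk)
    then show ?thesis using ylmm[OF l m] by (simp add: t2_exp t_def algebra_simps)
  qed
  have s1y: "s1 n y l = 1 / c" if l: "l \<in> LL n" for l
  proof -
    have "(\<Sum>m\<in>Nb n l. t2 n y l m) = (\<Sum>m\<in>Nb n l. t)" by (rule sum.cong) (auto simp: t2y l)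
    also have "\<dots> = d * t" using card_Nb_real[OF l n1] by (simp add: d_def)
    finally have "s1 n y l = \<alpha> + d * t" by (simp add: s1_exp yll)
    then show ?thesis using con' c4' by (simp add: field_simps)
  qed
  have ypos: "0 < y w" for w using pos by (simp add: y_def)
  have yD: "y \<in> Delta n"
  proof -
    have "(\<Sum>w\<in>Psi n. y w) = (\<Sum>l\<in>LL n. 1 / c)" unfolding sum_Psi_s1 by (rule sum.cong) (auto simp: s1y)
    also have "\<dots> = 1" using card_LL[of n] c4' by (simp add: c_def)
    finally show ?thesis using ypos by (simp add: Delta_def)
  qed
  have cinv: "0 < 1 / c" "1 / c < 1" using c4' by auto
  have f1: "frel ([l,l], Psi n - S1 n (fst l) (snd l)) y < M" if l: "l \<in> LL n" for l
  proof -
    have "frel ([l,l], Psi n - S1 n (fst l) (snd l)) y = Gf \<alpha> (1 - 1/c)" using frel1[OF yD l] s1y[OF l] yll by simp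
    also have "\<dots> < M" using Gf_less[of \<alpha> "1 - 1/c" M] pos a1 cinv M c1 by (simp add: c_def)
    finally show ?thesis .
  qed
  have f4: "frel ([l,m,linv l], S1 n (fst l) (snd l)) y < M" if l: "l \<in> LL n" and m: "m \<in> Nb n l" for l m
  proof -
    have fm: "fst l \<noteq> fst m" using m by (simp add: Nb_def)
    have "frel ([l,m,linv l], S1 n (fst l) (snd l)) y = Gf \<gamma> (1/c)" using frel4 s1y[OF l] fm by (simp add: ylmk)
    also have "\<dots> < M" using Gf_less[of \<gamma> "1/c" M] pos g1 cinv M c4 by (simp add: c_def)
    finally show ?thesis .
  qed
  have f2: "frel (w, Psi n - S2 n (fst l) (snd l) (fst m) (snd m)) y < M"
    if l: "l \<in> LL n" and m: "m \<in> Nb n l" and yw: "y w = \<beta>" for l m w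
  proof -
    have "frel (w, Psi n - S2 n (fst l) (snd l) (fst m) (snd m)) y = Gf \<beta> (1 - t)" using frel2[OF yD l m] t2y[OF l m] yw by simp
    also have "\<dots> < M" using Gf_less[of \<beta> "1 - t" M] pos b1 tpos t1 M c5 by (simp add: t_def d_def)
    finally show ?thesis .
  qed
  have all: "\<forall>r\<in>rels n. frel r y < M"
  proof
    fix r assume "r \<in> rels n"
    then consider
      (a) i0 t0 where "r = ([(i0,t0),(i0,t0)], Psi n - S1 n i0 t0)" "i0 \<in> {1..n}" "t0 \<in> sgns"
    | (b) i0 j0 t0 s0 where "r = ([(i0,t0),(j0,s0),(j0,s0)], Psi n - S2 n i0 t0 j0 s0)"
        "i0 \<in> {1..n}" "j0 \<in> {1..n}" "i0 \<noteq> j0" "t0 \<in> sgns" "s0 \<in> sgns"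
    | (c) i0 j0 t0 s0 where "r = ([(i0,t0),(j0,s0),(i0,t0)], Psi n - S2 n j0 s0 i0 t0)"
        "i0 \<in> {1..n}" "j0 \<in> {1..n}" "i0 \<noteq> j0" "t0 \<in> sgns" "s0 \<in> sgns"
    | (d) i0 j0 t0 s0 where "r = ([(i0,t0),(j0,s0),(i0,-t0)], S1 n i0 t0)"
        "i0 \<in> {1..n}" "j0 \<in> {1..n}" "i0 \<noteq> j0" "t0 \<in> sgns" "s0 \<in> sgns"
    | (e) i0 j0 k0 t0 s0 p0 where "r = ([(i0,t0),(j0,s0),(k0,p0)], Psi n - S2 n j0 s0 k0 p0)"
        "i0 \<in> {1..n}" "j0 \<in> {1..n}" "k0 \<in> {1..n}" "i0 \<noteq> j0" "j0 \<noteq> k0" "i0 \<noteq> k0"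
        "t0 \<in> sgns" "s0 \<in> sgns" "p0 \<in> sgns"
      unfolding rels_def by blast
    then show "frel r y < M"
    proof cases
      case a
      then show ?thesis using f1[of "(i0,t0)"] by (simp add: LL_def)
    next
      case b
      have "y [(i0,t0),(j0,s0),(j0,s0)] = \<beta>" using b by (simp add: ylmk linv_def)
      then show ?thesis using f2[of "(i0,t0)" "(j0,s0)"] b by (simp add: LL_def Nb_def)
    next
      case c
      have "y [(i0,t0),(j0,s0),(i0,t0)] = \<beta>" using c by (auto simp: ylmk linv_def sgns_def)
      then show ?thesis using f2[of "(j0,s0)" "(i0,t0)"] c by (simp add: LL_def Nb_def)
    next
      case d
      then show ?thesis using f4[of "(i0,t0)" "(j0,s0)"] by (simp add: LL_def Nb_def linv_def)
    next
      case e
      have "y [(i0,t0),(j0,s0),(k0,p0)] = \<beta>" using e by (auto simp: ylmk linv_def)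
      then show ?thesis using f2[of "(j0,s0)" "(k0,p0)"] e by (simp add: LL_def Nb_def)
    qed
  qed
  have ne: "rels n \<noteq> {}" using r1[OF one_LL[OF n1]] by blast
  have "FF n y < M" unfolding FF_def using all ne finite_rels[of n] by (simp add: Max_less_iff)
  then show ?thesis using yD by blast
qed



lemma sum_Nb_if: "(\<Sum>m\<in>Nb n l. g m) = (\<Sum>m\<in>LL n. if fst m \<noteq> fst l then g m else 0)"
  unfolding Nb_def by (rule sum.inter_filter[OF finite_LL])

lemma swap_lemma:
  fixes F :: "letter \<Rightarrow> letter \<Rightarrow> real"
  assumes n1: "1 \<le> n"
  shows "(\<Sum>l\<in>LL n. \<Sum>m\<in>Nb n l. \<Sum>k\<in>Nb n m - {linv l}. F m k)
       = (2 * real n - 3) * (\<Sum>m\<in>LL n. \<Sum>k\<in>Nb n m. F m k)"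
proof -
  define P where "P l m k \<longleftrightarrow> fst m \<noteq> fst l \<and> fst k \<noteq> fst m \<and> k \<noteq> linv l" for l m k :: letter
  have L: "(\<Sum>m\<in>Nb n l. \<Sum>k\<in>Nb n m - {linv l}. F m k) = (\<Sum>m\<in>LL n. \<Sum>k\<in>LL n. if P l m k then F m k else 0)" for l
  proof -
    have "(\<Sum>m\<in>Nb n l. \<Sum>k\<in>Nb n m - {linv l}. F m k) = (\<Sum>m\<in>LL n. if fst m \<noteq> fst l then (\<Sum>k\<in>Nb n m - {linv l}. F m k) else 0)"
      by (rule sum_Nb_if)
    also have "\<dots> = (\<Sum>m\<in>LL n. \<Sum>k\<in>LL n. if P l m k then F m k else 0)"
    proof (rule sum.cong[OF refl])
      fix m assume "m \<in> LL n"
      show "(if fst m \<noteq> fst l then (\<Sum>k\<in>Nb n m - {linv l}. F m k) else 0) = (\<Sum>k\<in>LL n. if P l m k then F m k else 0)"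
      proof (cases "fst m \<noteq> fst l")
        case True
        have "Nb n m - {linv l} = {k \<in> LL n. fst k \<noteq> fst m \<and> k \<noteq> linv l}" by (auto simp: Nb_def)
        then have "(\<Sum>k\<in>Nb n m - {linv l}. F m k) = (\<Sum>k\<in>LL n. if fst k \<noteq> fst m \<and> k \<noteq> linv l then F m k else 0)"
          using sum.inter_filter[OF finite_LL] by simp
        then show ?thesis using True by (simp add: P_def)
      next
        case False
        then show ?thesis by (simp add: P_def)
      qed
    qed
    finally show ?thesis .
  qed
  have R: "(\<Sum>l\<in>LL n. if P l m k then F m k else 0) = (if fst k \<noteq> fst m then (2 * real n - 3) * F m k else 0)"
    if m: "m \<in> LL n" and k: "k \<in> LL n" for m k
  proof (cases "fst k \<noteq> fst m")
    case True
    have kN: "k \<in> Nb n m" using True k by (simp add: Nb_def)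
    have li: "linv k \<in> Nb n m" using linv_in[OF k] True by (auto simp: Nb_def linv_def)
    have "(\<Sum>l\<in>LL n. if P l m k then F m k else 0) = (\<Sum>l\<in>LL n. if l \<in> Nb n m - {linv k} then F m k else 0)"
      by (rule sum.cong[OF refl]) (auto simp: P_def Nb_def linv_def True)
    also have "\<dots> = (\<Sum>l\<in>{l \<in> LL n. l \<in> Nb n m - {linv k}}. F m k)"
      by (rule sum.inter_filter[OF finite_LL, symmetric])
    also have "{l \<in> LL n. l \<in> Nb n m - {linv k}} = Nb n m - {linv k}" by (auto simp: Nb_def)
    also have "(\<Sum>l\<in>Nb n m - {linv k}. F m k) = (2 * real n - 3) * F m k"
    proof -
      have cpos: "1 \<le> card (Nb n m)" using li finite_Nb[of n m] by (metis One_nat_def Suc_leI card_gt_0_iff empty_iff)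
      have "real (card (Nb n m - {linv k})) = 2 * real n - 3"
        using card_Nb_real[OF m n1] li cpos by (simp add: card_Diff_singleton of_nat_diff)
      then show ?thesis by simp
    qed
    finally show ?thesis using True by simp
  next
    case False
    then show ?thesis by (simp add: P_def)
  qed
  have "(\<Sum>l\<in>LL n. \<Sum>m\<in>Nb n l. \<Sum>k\<in>Nb n m - {linv l}. F m k) = (\<Sum>l\<in>LL n. \<Sum>m\<in>LL n. \<Sum>k\<in>LL n. if P l m k then F m k else 0)"
    by (simp add: L)
  also have "\<dots> = (\<Sum>m\<in>LL n. \<Sum>l\<in>LL n. \<Sum>k\<in>LL n. if P l m k then F m k else 0)"
    by (rule sum.swap)
  also have "\<dots> = (\<Sum>m\<in>LL n. \<Sum>k\<in>LL n. \<Sum>l\<in>LL n. if P l m k then F m k else 0)"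
    by (rule sum.cong[OF refl]) (rule sum.swap)
  also have "\<dots> = (\<Sum>m\<in>LL n. \<Sum>k\<in>LL n. if fst k \<noteq> fst m then (2 * real n - 3) * F m k else 0)"
    by (rule sum.cong[OF refl], rule sum.cong[OF refl]) (simp add: R)
  also have "\<dots> = (\<Sum>m\<in>LL n. \<Sum>k\<in>Nb n m. (2 * real n - 3) * F m k)"
    by (simp add: sum_Nb_if)
  also have "\<dots> = (2 * real n - 3) * (\<Sum>m\<in>LL n. \<Sum>k\<in>Nb n m. F m k)"
    by (simp add: sum_distrib_left)
  finally show ?thesis .
qed

lemma sum2_zero:
  fixes e :: "'a \<Rightarrow> 'b \<Rightarrow> real"
  assumes "finite I" "\<And>i. i \<in> I \<Longrightarrow> finite (J i)" "\<And>i j. i \<in> I \<Longrightarrow> j \<in> J i \<Longrightarrow> 0 \<le> e i j"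
    and "(\<Sum>i\<in>I. \<Sum>j\<in>J i. e i j) = 0"
  shows "\<And>i j. i \<in> I \<Longrightarrow> j \<in> J i \<Longrightarrow> e i j = 0"
proof -
  have nn: "\<And>i. i \<in> I \<Longrightarrow> 0 \<le> (\<Sum>j\<in>J i. e i j)" using assms(3) by (simp add: sum_nonneg)
  have iff: "(\<Sum>i\<in>I. \<Sum>j\<in>J i. e i j) = 0 \<longleftrightarrow> (\<forall>i\<in>I. (\<Sum>j\<in>J i. e i j) = 0)"
    by (rule sum_nonneg_eq_0_iff[OF assms(1) nn])
  have z: "\<forall>i\<in>I. (\<Sum>j\<in>J i. e i j) = 0" using iff assms(4) by blast
  fix i j assume i: "i \<in> I" and j: "j \<in> J i"
  have nn2: "\<And>j. j \<in> J i \<Longrightarrow> 0 \<le> e i j" using assms(3) i by blast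
  have iff2: "(\<Sum>j\<in>J i. e i j) = 0 \<longleftrightarrow> (\<forall>j\<in>J i. e i j = 0)"
    by (rule sum_nonneg_eq_0_iff[OF assms(2)[OF i] nn2])
  have "\<forall>j\<in>J i. e i j = 0" using iff2 z i by blast
  then show "e i j = 0" using j by blast
qed

lemma Psi_cases: assumes "w \<in> Psi n"
  obtains (t1) l where "l \<in> LL n" "w = [l,l]"
  | (t2) l m where "l \<in> LL n" "m \<in> Nb n l" "w = [l,m,m]"
  | (t3) l m k where "l \<in> LL n" "m \<in> Nb n l" "k \<in> Nb n m" "w = [l,m,k]"
proof -
  obtain l where l: "l \<in> LL n" "w \<in> S1 n (fst l) (snd l)" using assms Psi_eq by auto
  then have "w = [l,l] \<or> (\<exists>m\<in>Nb n l. w = [l,m,m] \<or> (\<exists>k\<in>Nb n m. w = [l,m,k]))"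
    by (auto simp: S1_eq S2_eq)
  then show ?thesis
  proof (elim disjE)
    assume "w = [l,l]" then show ?thesis using that(1) l(1) by blast
  next
    assume "\<exists>m\<in>Nb n l. w = [l,m,m] \<or> (\<exists>k\<in>Nb n m. w = [l,m,k])"
    then obtain m where m: "m \<in> Nb n l" and "w = [l,m,m] \<or> (\<exists>k\<in>Nb n m. w = [l,m,k])" by blast
    then show ?thesis using that(2,3) l(1) by blast
  qed
qed

lemma ty2_2: "\<not> type2 [a,b]" by (simp add: type2_def)
lemma ty3_2: "\<not> type3 [a,b]" by (simp add: type3_def)
lemma ty5_2: "\<not> type5 [a,b]" by (simp add: type5_def)
lemma ty2_3: "type2 [l,m,k] \<longleftrightarrow> fst l \<noteq> fst m \<and> k = m"
  by (cases l, cases m, cases k) (auto simp: type2_def)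
lemma ty3_3: "type3 [l,m,k] \<longleftrightarrow> fst l \<noteq> fst m \<and> k = l"
  by (cases l, cases m, cases k) (auto simp: type3_def)
lemma ty5_3: "type5 [l,m,k] \<longleftrightarrow> fst l \<noteq> fst m \<and> fst m \<noteq> fst k \<and> fst l \<noteq> fst k"
  by (cases l, cases m, cases k) (auto simp: type5_def)

lemma tc1: assumes "w \<in> Psi n" "type1 w" shows "\<exists>l\<in>LL n. w = [l,l]"
  using assms(1) proof (cases rule: Psi_cases)
  case (t2 l m) then show ?thesis using assms(2) by (simp add: ty1_3)
next
  case (t3 l m k) then show ?thesis using assms(2) by (simp add: ty1_3)
qed auto

lemma tc4: assumes "w \<in> Psi n" "type4 w" shows "\<exists>l\<in>LL n. \<exists>m\<in>Nb n l. w = [l,m,linv l]"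
  using assms(1) proof (cases rule: Psi_cases)
  case (t1 l) then show ?thesis using assms(2) by (simp add: ty4_2)
next
  case (t2 l m) then show ?thesis using assms(2) by (auto simp: ty4_3 linv_def Nb_def)
next
  case (t3 l m k) then show ?thesis using assms(2) by (auto simp: ty4_3)
qed

lemma tc235: assumes "w \<in> Psi n" "type2 w \<or> type3 w \<or> type5 w"
  shows "(\<exists>l\<in>LL n. \<exists>m\<in>Nb n l. w = [l,m,m]) \<or> (\<exists>l\<in>LL n. \<exists>m\<in>Nb n l. \<exists>k\<in>Nb n m. k \<noteq> linv l \<and> w = [l,m,k])"
  using assms(1) proof (cases rule: Psi_cases)
  case (t1 l) then show ?thesis using assms(2) by (simp add: ty2_2 ty3_2 ty5_2)
next
  case (t2 l m) then show ?thesis by auto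
next
  case (t3 l m k)
  have "k \<noteq> linv l"
  proof
    assume k: "k = linv l"
    then show False using assms(2) t3 by (cases l) (auto simp: ty2_3 ty3_3 ty5_3 linv_def Nb_def LL_def sgns_def)
  qed
  then show ?thesis using t3 by auto
qed



lemma sum_Sigma_fs: "finite A \<Longrightarrow> (\<And>a. a \<in> A \<Longrightarrow> finite (B a)) \<Longrightarrow>
  (\<Sum>p\<in>Sigma A B. f (fst p) (snd p)) = (\<Sum>a\<in>A. \<Sum>b\<in>B a. (f a b :: real))"
  using sum.Sigma[of A B "\<lambda>a b. f a b"] by (simp add: split_def)

theorem lemma5p8:
  fixes n :: nat and xs :: "word \<Rightarrow> real"
  assumes "n \<ge> 2"
    and "xs \<in> Delta n"
    and "FF n xs = (INF x\<in>Delta n. FF n x)"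
  shows "\<exists>a b c :: real. a \<in> {0<..<1} \<and> b \<in> {0<..<1} \<and> c \<in> {0<..<1} \<and>
           (\<forall>\<psi>\<in>Psi n. type1 \<psi> \<longrightarrow> xs \<psi> = a) \<and>
           (\<forall>\<psi>\<in>Psi n. (type2 \<psi> \<or> type3 \<psi> \<or> type5 \<psi>) \<longrightarrow> xs \<psi> = b) \<and>
           (\<forall>\<psi>\<in>Psi n. type4 \<psi> \<longrightarrow> xs \<psi> = c)"
proof -
  have n2: "2 \<le> n" and xD: "xs \<in> Delta n" using assms by auto
  have n1: "1 \<le> n" using n2 by simp
  define M where "M = FF n xs"
  have M1: "1 < M" unfolding M_def by (rule M_gt1[OF xD n2])
  have Mp: "0 < M" using M1 by simp
  have bdd: "bdd_below (FF n ` Delta n)"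
    by (rule bdd_belowI2[of _ 0]) (auto intro: less_imp_le FF_pos[OF _ n1])
  have minM: "M \<le> FF n y" if "y \<in> Delta n" for y
    using cINF_lower[OF bdd that] assms(3) by (simp add: M_def)
  have nocomp: "\<not> (\<exists>y\<in>Delta n. FF n y < M)" using minM by force

  define c where "c = 2 * real n"
  define d where "d = 2 * real n - 2"
  define N where "N = c * d"
  have c4: "4 \<le> c" and d2: "2 \<le> d" using n2 by (simp_all add: c_def d_def)
  have Npos: "0 < N" using c4 d2 by (simp add: N_def)
  have cardLL: "real (card (LL n)) = c" by (simp add: card_LL c_def)
  have cardNb: "real (card (Nb n l)) = d" if "l \<in> LL n" for l using card_Nb_real[OF that n1] by (simp add: d_def)
  have finNb: "\<And>l. finite (Nb n l)" by (rule finite_Nb)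
  have cardSig: "real (card (Sigma (LL n) (Nb n))) = N"
  proof -
    have "card (Sigma (LL n) (Nb n)) = (\<Sum>l\<in>LL n. card (Nb n l))" using finite_LL finNb by simp
    then have "real (card (Sigma (LL n) (Nb n))) = (\<Sum>l\<in>LL n. real (card (Nb n l)))" by simp
    also have "\<dots> = (\<Sum>l\<in>LL n. d)" by (rule sum.cong) (auto simp: cardNb)
    finally show ?thesis using cardLL by (simp add: N_def)
  qed
  have LLne: "LL n \<noteq> {}" using one_LL[OF n1] by blast
  have Nbne: "Nb n l \<noteq> {}" if "l \<in> LL n" for l
  proof
    assume "Nb n l = {}" then have "real (card (Nb n l)) = 0" by simp
    then show False using cardNb[OF that] d2 by simp
  qed

  have s1_0: "0 < s1 n xs l" "s1 n xs l < 1" if "l \<in> LL n" for l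
    using s1_pos[OF xD that] s1_lt1[OF xD that] by auto
  have t2_0: "0 < t2 n xs l m" "t2 n xs l m < 1" if "l \<in> LL n" "m \<in> Nb n l" for l m
    using t2_pos[OF xD that] t2_lt1[OF xD that] by auto
  have t2split: "t2 n xs l m = (xs [l,m,m] + (\<Sum>k\<in>Nb n m - {linv l}. xs [l,m,k])) + xs [l,m,linv l]"
    if l: "l \<in> LL n" and m: "m \<in> Nb n l" for l m
  proof -
    have "(\<Sum>k\<in>Nb n m. xs [l,m,k]) = xs [l,m,linv l] + (\<Sum>k\<in>Nb n m - {linv l}. xs [l,m,k])"
      by (rule sum.remove[OF finite_Nb linv_Nb[OF l m]])
    then show ?thesis by (simp add: t2_exp)
  qed

  define A where "A = (\<Sum>l\<in>LL n. xs [l,l])"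
  define C where "C = (\<Sum>l\<in>LL n. \<Sum>m\<in>Nb n l. xs [l,m,linv l])"
  define B where "B = (\<Sum>l\<in>LL n. \<Sum>m\<in>Nb n l. xs [l,m,m] + (\<Sum>k\<in>Nb n m - {linv l}. xs [l,m,k]))"
  define T where "T = (\<Sum>l\<in>LL n. \<Sum>m\<in>Nb n l. t2 n xs l m)"
  have AT: "A + T = 1"
  proof -
    have "1 = (\<Sum>l\<in>LL n. s1 n xs l)" using D_tot_s1[OF xD] by simp
    also have "\<dots> = (\<Sum>l\<in>LL n. xs [l,l] + (\<Sum>m\<in>Nb n l. t2 n xs l m))" by (simp add: s1_exp)
    also have "\<dots> = A + T" by (simp add: sum.distrib A_def T_def)
    finally show ?thesis by simp
  qed
  have TBC: "T = B + C"
  proof -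
    have "T = (\<Sum>l\<in>LL n. \<Sum>m\<in>Nb n l. (xs [l,m,m] + (\<Sum>k\<in>Nb n m - {linv l}. xs [l,m,k])) + xs [l,m,linv l])"
      unfolding T_def by (intro sum.cong refl) (simp add: t2split)
    also have "\<dots> = B + C" by (simp add: sum.distrib B_def C_def)
    finally show ?thesis .
  qed
  have Tpos: "0 < T" unfolding T_def
    using finite_LL LLne by (intro sum_pos) (auto intro!: sum_pos t2_0 simp: finite_Nb Nbne)
  have Anonneg: "0 \<le> A" unfolding A_def using xD by (intro sum_nonneg less_imp_le Dl_pos w1_Psi) auto
  define tb where "tb = T / N"
  have tb0: "0 < tb" using Tpos Npos by (simp add: tb_def)
  have tb1: "tb < 1"
  proof -
    have "T \<le> 1" using AT Anonneg by simp
    moreover have "1 * 1 < N" using c4 d2 unfolding N_def by (intro mult_strict_mono) auto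
    ultimately show ?thesis unfolding tb_def using Npos by (simp add: divide_less_eq)
  qed

  have cinv: "0 < 1 / c" "1 / c < 1" using c4 by auto
  have ub1: "0 \<le> s1 n xs l \<and> s1 n xs l \<le> 1" if "l \<in> LL n" for l
    using s1_0[OF that] by simp
  have ub4: "0 \<le> 1 - s1 n xs l \<and> 1 - s1 n xs l \<le> 1" if "l \<in> LL n" for l
    using s1_0[OF that] by simp
  have sum1: "(\<Sum>l\<in>LL n. s1 n xs l) = real (card (LL n)) * (1/c)"
    using D_tot_s1[OF xD] cardLL c4 by simp
  have cinv2: "0 < 1 - 1/c" "1 - 1/c < 1" using cinv by auto
  have J1: "c * HH M (1/c) \<le> (\<Sum>l\<in>LL n. HH M (s1 n xs l))"
    using jensen_HH(1)[OF finite_LL[of n] M1 ub1 cinv sum1] cardLL by simp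
  have sum1s: "(\<Sum>l\<in>LL n. 1 - s1 n xs l) = real (card (LL n)) * (1 - 1/c)"
    using D_tot_s1[OF xD] cardLL c4 by (simp add: sum_subtractf algebra_simps)
  have J4: "c * HH M (1 - 1/c) \<le> (\<Sum>l\<in>LL n. HH M (1 - s1 n xs l))"
    using jensen_HH(1)[OF finite_LL[of n] M1 ub4 cinv2 sum1s] cardLL by simp
  have J4eq: "\<forall>l\<in>LL n. s1 n xs l = 1/c" if "(\<Sum>l\<in>LL n. HH M (1 - s1 n xs l)) \<le> c * HH M (1 - 1/c)"
  proof -
    have "\<forall>l\<in>LL n. 1 - s1 n xs l = 1 - 1/c"
      using jensen_HH(2)[OF finite_LL[of n] M1 ub4 cinv2 sum1s] cardLL that by simp
    then show ?thesis by auto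
  qed
  have finSig: "finite (Sigma (LL n) (Nb n))" by (intro finite_SigmaI finite_LL finite_Nb)
  have sumSig: "(\<Sum>p\<in>Sigma (LL n) (Nb n). t2 n xs (fst p) (snd p)) = real (card (Sigma (LL n) (Nb n))) * tb"
    using sum_Sigma_fs[OF finite_LL finNb, of "t2 n xs"] cardSig Npos by (simp add: T_def tb_def)
  have HSig: "(\<Sum>p\<in>Sigma (LL n) (Nb n). HH M (t2 n xs (fst p) (snd p))) = (\<Sum>l\<in>LL n. \<Sum>m\<in>Nb n l. HH M (t2 n xs l m))"
    using sum_Sigma_fs[OF finite_LL finNb, of "\<lambda>l m. HH M (t2 n xs l m)"] by simp
  have ubSig: "0 \<le> t2 n xs (fst p) (snd p) \<and> t2 n xs (fst p) (snd p) \<le> 1" if "p \<in> Sigma (LL n) (Nb n)" for p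
    using that t2_0[of "fst p" "snd p"] by (auto intro: less_imp_le)
  have J2: "N * HH M tb \<le> (\<Sum>l\<in>LL n. \<Sum>m\<in>Nb n l. HH M (t2 n xs l m))"
    using jensen_HH(1)[OF finSig M1 ubSig tb0 tb1 sumSig] cardSig HSig by simp
  have J2eq: "t2 n xs l m = tb" if le: "(\<Sum>l\<in>LL n. \<Sum>m\<in>Nb n l. HH M (t2 n xs l m)) \<le> N * HH M tb"
    and l: "l \<in> LL n" and m: "m \<in> Nb n l" for l m
  proof -
    have "\<forall>p\<in>Sigma (LL n) (Nb n). t2 n xs (fst p) (snd p) = tb"
      using jensen_HH(2)[OF finSig M1 ubSig tb0 tb1 sumSig] cardSig HSig le by simp
    then show ?thesis using l m by force
  qed

  have lbA: "(\<Sum>l\<in>LL n. HH M (s1 n xs l)) \<le> A"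
    unfolding A_def M_def by (intro sum_mono L1[OF xD n1])
  have lbC: "(\<Sum>l\<in>LL n. \<Sum>m\<in>Nb n l. HH M (1 - s1 n xs l)) \<le> C"
    unfolding C_def M_def by (intro sum_mono L4[OF xD n1]) auto
  have eqC: "(\<Sum>l\<in>LL n. \<Sum>m\<in>Nb n l. HH M (1 - s1 n xs l)) = d * (\<Sum>l\<in>LL n. HH M (1 - s1 n xs l))"
    by (simp add: sum_distrib_left cardNb cong: sum.cong)
  define BL where "BL = (\<Sum>l\<in>LL n. \<Sum>m\<in>Nb n l. HH M (t2 n xs l m) + (\<Sum>k\<in>Nb n m - {linv l}. HH M (t2 n xs m k)))"
  have lbB: "BL \<le> B"
    unfolding BL_def B_def
  proof (intro sum_mono)
    fix l m assume l: "l \<in> LL n" and m: "m \<in> Nb n l"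
    have "HH M (t2 n xs l m) \<le> xs [l,m,m]" unfolding M_def by (rule L2[OF xD n1 l m])
    moreover have "(\<Sum>k\<in>Nb n m - {linv l}. HH M (t2 n xs m k)) \<le> (\<Sum>k\<in>Nb n m - {linv l}. xs [l,m,k])"
      unfolding M_def by (rule sum_mono, rule L35[OF xD n1 l m]) auto
    ultimately show "HH M (t2 n xs l m) + (\<Sum>k\<in>Nb n m - {linv l}. HH M (t2 n xs m k)) \<le> xs [l,m,m] + (\<Sum>k\<in>Nb n m - {linv l}. xs [l,m,k])"
      by (rule add_mono)
  qed
  have eqB: "BL = d * (\<Sum>l\<in>LL n. \<Sum>m\<in>Nb n l. HH M (t2 n xs l m))"
  proof -
    have "BL = (\<Sum>l\<in>LL n. \<Sum>m\<in>Nb n l. HH M (t2 n xs l m)) + (\<Sum>l\<in>LL n. \<Sum>m\<in>Nb n l. \<Sum>k\<in>Nb n m - {linv l}. HH M (t2 n xs m k))"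
      unfolding BL_def by (simp add: sum.distrib)
    also have "(\<Sum>l\<in>LL n. \<Sum>m\<in>Nb n l. \<Sum>k\<in>Nb n m - {linv l}. HH M (t2 n xs m k)) = (2 * real n - 3) * (\<Sum>l\<in>LL n. \<Sum>m\<in>Nb n l. HH M (t2 n xs l m))"
      by (rule swap_lemma[OF n1])
    finally show ?thesis by (simp add: d_def algebra_simps)
  qed

  define \<alpha>0 where "\<alpha>0 = A / c"
  define \<gamma>0 where "\<gamma>0 = C / N"
  define \<beta>0 where "\<beta>0 = B / (d * N)"
  define \<alpha>s where "\<alpha>s = HH M (1/c)"
  define \<gamma>s where "\<gamma>s = HH M (1 - 1/c)"
  define \<beta>s where "\<beta>s = HH M tb"
  have \<alpha>sp: "0 < \<alpha>s" unfolding \<alpha>s_def using Mp cinv by (intro HH_pos) auto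
  have \<gamma>sp: "0 < \<gamma>s" unfolding \<gamma>s_def using Mp cinv by (intro HH_pos) auto
  have \<beta>sp: "0 < \<beta>s" unfolding \<beta>s_def using Mp tb0 tb1 by (intro HH_pos) auto
  have h\<alpha>: "\<alpha>s \<le> \<alpha>0" using J1 lbA c4 unfolding \<alpha>s_def \<alpha>0_def by (simp add: le_divide_eq mult.commute)
  have h\<gamma>: "\<gamma>s \<le> \<gamma>0"
  proof -
    have "d * (c * \<gamma>s) \<le> d * (\<Sum>l\<in>LL n. HH M (1 - s1 n xs l))"
      using J4 d2 unfolding \<gamma>s_def by (intro mult_left_mono) auto
    moreover have "N * \<gamma>s = d * (c * \<gamma>s)" by (simp add: N_def algebra_simps)
    ultimately have "N * \<gamma>s \<le> C" using eqC lbC by linarith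
    then show ?thesis unfolding \<gamma>0_def using Npos by (simp add: le_divide_eq mult.commute)
  qed
  have h\<beta>: "\<beta>s \<le> \<beta>0"
  proof -
    have "d * (N * \<beta>s) \<le> d * (\<Sum>l\<in>LL n. \<Sum>m\<in>Nb n l. HH M (t2 n xs l m))"
      using J2 d2 unfolding \<beta>s_def by (intro mult_left_mono) auto
    then have "d * (N * \<beta>s) \<le> B" using eqB lbB by linarith
    then show ?thesis unfolding \<beta>0_def using Npos d2 by (simp add: le_divide_eq mult.commute mult.left_commute)
  qed
  have con0: "c * (\<alpha>0 + d * (\<gamma>0 + d * \<beta>0)) = 1"
  proof -
    have "c * (\<alpha>0 + d * (\<gamma>0 + d * \<beta>0)) = A + C + B"
      unfolding \<alpha>0_def \<gamma>0_def \<beta>0_def N_def using c4 d2 by (simp add: field_simps)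
    then show ?thesis using AT TBC by simp
  qed
  have tsum: "\<gamma>0 + d * \<beta>0 = tb"
    unfolding \<gamma>0_def \<beta>0_def tb_def using TBC Npos d2 by (simp add: field_simps)
  have \<beta>0p: "0 < \<beta>0" using h\<beta> \<beta>sp by simp
  have \<gamma>0p: "0 < \<gamma>0" using h\<gamma> \<gamma>sp by simp
  have \<alpha>0p: "0 < \<alpha>0" using h\<alpha> \<alpha>sp by simp

  have gam: "\<gamma>0 = \<gamma>s"
  proof (rule ccontr)
    assume "\<gamma>0 \<noteq> \<gamma>s"
    then have gt: "\<gamma>s < \<gamma>0" using h\<gamma> by simp
    define \<delta> where "\<delta> = N * (\<gamma>0 - \<gamma>s) / 2"
    have \<delta>p: "0 < \<delta>" using gt Npos by (simp add: \<delta>_def)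
    define \<alpha>1 where "\<alpha>1 = \<alpha>0 + \<delta> / c"
    define \<gamma>1 where "\<gamma>1 = \<gamma>0 - \<delta> / N"
    have g1: "\<gamma>1 = (\<gamma>0 + \<gamma>s) / 2" unfolding \<gamma>1_def \<delta>_def using Npos by (simp add: field_simps)
    have a1: "\<alpha>0 < \<alpha>1" unfolding \<alpha>1_def using \<delta>p c4 by simp
    have con1: "2 * real n * (\<alpha>1 + (2 * real n - 2) * (\<gamma>1 + (2 * real n - 2) * \<beta>0)) = 1"
    proof -
      have "c * (\<alpha>1 + d * (\<gamma>1 + d * \<beta>0)) = c * (\<alpha>0 + d * (\<gamma>0 + d * \<beta>0))"
        unfolding \<alpha>1_def \<gamma>1_def N_def using c4 d2 by (simp add: field_simps)
      then have "c * (\<alpha>1 + d * (\<gamma>1 + d * \<beta>0)) = 1" using con0 by simp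
      then show ?thesis unfolding c_def d_def .
    qed
    have c5: "HH M (\<gamma>1 + (2 * real n - 2) * \<beta>0) < \<beta>0"
    proof -
      have "HH M (\<gamma>1 + d * \<beta>0) < HH M tb"
        using Mp g1 gt tsum tb1 \<gamma>sp \<beta>0p d2 by (intro HH_less) (auto intro: add_nonneg_nonneg)
      then show ?thesis using h\<beta> unfolding \<beta>s_def d_def by simp
    qed
    have "\<exists>y\<in>Delta n. FF n y < M"
      by (rule competitor[OF n2 Mp _ _ \<beta>0p con1 _ _ c5])
        (use a1 \<alpha>0p g1 gt \<gamma>sp h\<alpha> in \<open>auto simp: \<alpha>s_def \<gamma>s_def c_def\<close>)
    then show False using nocomp by blast
  qed

  have bet: "\<beta>0 = \<beta>s"
  proof (rule ccontr)
    assume "\<beta>0 \<noteq> \<beta>s"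
    then have gt: "\<beta>s < \<beta>0" using h\<beta> by simp
    define \<delta> where "\<delta> = d * N * (\<beta>0 - \<beta>s) / 2"
    have \<delta>p: "0 < \<delta>" using gt Npos d2 by (simp add: \<delta>_def)
    define \<alpha>1 where "\<alpha>1 = \<alpha>0 + \<delta> / c"
    define \<gamma>1 where "\<gamma>1 = \<gamma>0 + \<delta> / N"
    have bs: "\<beta>s = \<beta>0 - 2 * \<delta> / (d * N)" unfolding \<delta>_def using Npos d2 by (simp add: field_simps)
    have a1: "\<alpha>0 < \<alpha>1" unfolding \<alpha>1_def using \<delta>p c4 by simp
    have g1: "\<gamma>0 < \<gamma>1" unfolding \<gamma>1_def using \<delta>p Npos by simp
    have con1: "2 * real n * (\<alpha>1 + (2 * real n - 2) * (\<gamma>1 + (2 * real n - 2) * \<beta>s)) = 1"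
    proof -
      have "c * (\<alpha>1 + d * (\<gamma>1 + d * \<beta>s)) = c * (\<alpha>0 + d * (\<gamma>0 + d * \<beta>0))"
        unfolding \<alpha>1_def \<gamma>1_def bs N_def using c4 d2 by (simp add: field_simps)
      then have "c * (\<alpha>1 + d * (\<gamma>1 + d * \<beta>s)) = 1" using con0 by simp
      then show ?thesis unfolding c_def d_def .
    qed
    have dd: "d * (2 * \<delta> / (d * N)) = 2 * \<delta> / N" using d2 by simp
    have "\<gamma>1 + d * \<beta>s = (\<gamma>0 + d * \<beta>0) + \<delta> / N - d * (2 * \<delta> / (d * N))"
      unfolding \<gamma>1_def bs by (simp add: algebra_simps)
    then have tt: "\<gamma>1 + d * \<beta>s = tb - \<delta> / N" using tsum dd by simp
    have c5: "HH M (\<gamma>1 + (2 * real n - 2) * \<beta>s) < \<beta>s"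
    proof -
      have v0: "0 \<le> \<gamma>1 + d * \<beta>s" using g1 \<gamma>0p \<beta>sp d2 by (intro add_nonneg_nonneg) auto
      have v1: "\<gamma>1 + d * \<beta>s < tb" using tt \<delta>p Npos by simp
      have "HH M (\<gamma>1 + d * \<beta>s) < HH M tb"
        by (rule HH_less[OF Mp v0 v1]) (use tb1 in simp)
      then show ?thesis unfolding \<beta>s_def d_def by simp
    qed
    have "\<exists>y\<in>Delta n. FF n y < M"
      by (rule competitor[OF n2 Mp _ _ \<beta>sp con1 _ _ c5])
        (use a1 \<alpha>0p g1 gam \<gamma>0p h\<alpha> in \<open>auto simp: \<alpha>s_def \<gamma>s_def c_def\<close>)
    then show False using nocomp by blast
  qed

  have Ceq: "C = N * \<gamma>s" using gam Npos unfolding \<gamma>0_def by (simp add: field_simps)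
  have Beq: "B = d * N * \<beta>s" using bet Npos d2 unfolding \<beta>0_def by (simp add: field_simps)
  have sC: "(\<Sum>l\<in>LL n. HH M (1 - s1 n xs l)) \<le> c * \<gamma>s"
  proof -
    have "N * \<gamma>s = d * (c * \<gamma>s)" by (simp add: N_def algebra_simps)
    then have "d * (\<Sum>l\<in>LL n. HH M (1 - s1 n xs l)) \<le> d * (c * \<gamma>s)" using lbC eqC Ceq by linarith
    then show ?thesis by (rule mult_left_le_imp_le) (use d2 in simp)
  qed
  have s1c: "\<forall>l\<in>LL n. s1 n xs l = 1/c" using J4eq sC unfolding \<gamma>s_def by simp
  have type4v: "xs [l,m,linv l] = \<gamma>s" if l: "l \<in> LL n" and m: "m \<in> Nb n l" for l m
  proof -
    have z: "(\<Sum>l\<in>LL n. \<Sum>m\<in>Nb n l. xs [l,m,linv l] - HH M (1 - s1 n xs l)) = 0"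
    proof -
      have "(\<Sum>l\<in>LL n. \<Sum>m\<in>Nb n l. xs [l,m,linv l] - HH M (1 - s1 n xs l)) = C - (\<Sum>l\<in>LL n. \<Sum>m\<in>Nb n l. HH M (1 - s1 n xs l))"
        unfolding C_def by (simp add: sum_subtractf)
      moreover have "C \<le> (\<Sum>l\<in>LL n. \<Sum>m\<in>Nb n l. HH M (1 - s1 n xs l))"
      proof -
        have "d * (c * \<gamma>s) \<le> d * (\<Sum>l\<in>LL n. HH M (1 - s1 n xs l))"
          using J4 d2 unfolding \<gamma>s_def by (intro mult_left_mono) auto
        moreover have "N * \<gamma>s = d * (c * \<gamma>s)" by (simp add: N_def algebra_simps)
        ultimately show ?thesis using eqC Ceq by linarith
      qed
      ultimately show ?thesis using lbC by simp
    qed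
    have "xs [l,m,linv l] - HH M (1 - s1 n xs l) = 0"
      by (rule sum2_zero[OF finite_LL finite_Nb _ z l m])
        (use L4[OF xD n1] in \<open>auto simp: M_def\<close>)
    then show ?thesis using s1c l unfolding \<gamma>s_def by simp
  qed
  have sB: "(\<Sum>l\<in>LL n. \<Sum>m\<in>Nb n l. HH M (t2 n xs l m)) \<le> N * HH M tb"
  proof -
    have "d * N * \<beta>s = d * (N * \<beta>s)" by (simp add: algebra_simps)
    then have "d * (\<Sum>l\<in>LL n. \<Sum>m\<in>Nb n l. HH M (t2 n xs l m)) \<le> d * (N * HH M tb)"
      using lbB eqB Beq unfolding \<beta>s_def by linarith
    then show ?thesis by (rule mult_left_le_imp_le) (use d2 in simp)
  qed
  have t2c: "t2 n xs l m = tb" if "l \<in> LL n" "m \<in> Nb n l" for l m using J2eq[OF sB that] .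
  have Bz: "(\<Sum>l\<in>LL n. \<Sum>m\<in>Nb n l. (xs [l,m,m] - HH M (t2 n xs l m)) + (\<Sum>k\<in>Nb n m - {linv l}. xs [l,m,k] - HH M (t2 n xs m k))) = 0"
  proof -
    have "(\<Sum>l\<in>LL n. \<Sum>m\<in>Nb n l. (xs [l,m,m] - HH M (t2 n xs l m)) + (\<Sum>k\<in>Nb n m - {linv l}. xs [l,m,k] - HH M (t2 n xs m k))) = B - BL"
      unfolding B_def BL_def by (simp add: sum_subtractf sum.distrib algebra_simps)
    moreover have "B \<le> BL"
    proof -
      have "d * (N * \<beta>s) \<le> d * (\<Sum>l\<in>LL n. \<Sum>m\<in>Nb n l. HH M (t2 n xs l m))"
        using J2 d2 unfolding \<beta>s_def by (intro mult_left_mono) auto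
      moreover have "d * N * \<beta>s = d * (N * \<beta>s)" by (simp add: algebra_simps)
      ultimately show ?thesis using eqB Beq by linarith
    qed
    ultimately show ?thesis using lbB by simp
  qed
  have Bparts: "(xs [l,m,m] - HH M (t2 n xs l m)) + (\<Sum>k\<in>Nb n m - {linv l}. xs [l,m,k] - HH M (t2 n xs m k)) = 0"
    if l: "l \<in> LL n" and m: "m \<in> Nb n l" for l m
  proof (rule sum2_zero[OF finite_LL finite_Nb _ Bz l m])
    fix l m assume l: "l \<in> LL n" and m: "m \<in> Nb n l"
    have "0 \<le> xs [l,m,m] - HH M (t2 n xs l m)" using L2[OF xD n1 l m] by (simp add: M_def)
    moreover have "0 \<le> (\<Sum>k\<in>Nb n m - {linv l}. xs [l,m,k] - HH M (t2 n xs m k))"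
      using L35[OF xD n1 l m] by (intro sum_nonneg) (auto simp: M_def)
    ultimately show "0 \<le> (xs [l,m,m] - HH M (t2 n xs l m)) + (\<Sum>k\<in>Nb n m - {linv l}. xs [l,m,k] - HH M (t2 n xs m k))"
      by simp
  qed
  have type2v: "xs [l,m,m] = \<beta>s" if l: "l \<in> LL n" and m: "m \<in> Nb n l" for l m
  proof -
    have "0 \<le> xs [l,m,m] - HH M (t2 n xs l m)" using L2[OF xD n1 l m] by (simp add: M_def)
    moreover have "0 \<le> (\<Sum>k\<in>Nb n m - {linv l}. xs [l,m,k] - HH M (t2 n xs m k))"
      using L35[OF xD n1 l m] by (intro sum_nonneg) (auto simp: M_def)
    ultimately have "xs [l,m,m] - HH M (t2 n xs l m) = 0" using Bparts[OF l m] by linarith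
    then show ?thesis using t2c[OF l m] unfolding \<beta>s_def by simp
  qed
  have type35v: "xs [l,m,k] = \<beta>s" if l: "l \<in> LL n" and m: "m \<in> Nb n l" and k: "k \<in> Nb n m" and kl: "k \<noteq> linv l" for l m k
  proof -
    have nn: "\<And>k. k \<in> Nb n m - {linv l} \<Longrightarrow> 0 \<le> xs [l,m,k] - HH M (t2 n xs m k)"
      using L35[OF xD n1 l m] by (auto simp: M_def)
    have "0 \<le> xs [l,m,m] - HH M (t2 n xs l m)" using L2[OF xD n1 l m] by (simp add: M_def)
    moreover have "0 \<le> (\<Sum>k\<in>Nb n m - {linv l}. xs [l,m,k] - HH M (t2 n xs m k))"
      using nn by (intro sum_nonneg) auto
    ultimately have z: "(\<Sum>k\<in>Nb n m - {linv l}. xs [l,m,k] - HH M (t2 n xs m k)) = 0" using Bparts[OF l m] by linarith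
    have iff: "(\<Sum>k\<in>Nb n m - {linv l}. xs [l,m,k] - HH M (t2 n xs m k)) = 0 \<longleftrightarrow> (\<forall>k\<in>Nb n m - {linv l}. xs [l,m,k] - HH M (t2 n xs m k) = 0)"
      by (rule sum_nonneg_eq_0_iff) (use finite_Nb nn in auto)
    have "xs [l,m,k] - HH M (t2 n xs m k) = 0" using iff z k kl by blast
    moreover have "t2 n xs m k = tb" using t2c[OF Nb_LL[OF m] k] .
    ultimately show ?thesis unfolding \<beta>s_def by simp
  qed
  have type1v: "xs [l,l] = 1/c - d * tb" if l: "l \<in> LL n" for l
  proof -
    have "(\<Sum>m\<in>Nb n l. t2 n xs l m) = (\<Sum>m\<in>Nb n l. tb)" by (rule sum.cong) (auto simp: t2c l)
    also have "\<dots> = d * tb" using cardNb[OF l] by simp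
    finally show ?thesis using s1_exp[of n xs l] s1c l by simp
  qed

  define l0 where "l0 = (1::nat, 1::int)"
  define m0 where "m0 = (2::nat, 1::int)"
  have l0L: "l0 \<in> LL n" unfolding l0_def using one_LL[OF n1] .
  have m0N: "m0 \<in> Nb n l0" unfolding l0_def m0_def using two_Nb[OF n2] .
  have inr: "xs w \<in> {0<..<1}" if "w \<in> Psi n" for w using Dl_pos[OF xD that] word_lt1[OF xD n1 that] by simp
  show ?thesis
  proof (intro exI conjI)
    show "xs [l0,l0] \<in> {0<..<1}" by (rule inr[OF w1_Psi[OF l0L]])
    show "xs [l0,m0,m0] \<in> {0<..<1}" by (rule inr[OF w2_Psi[OF l0L m0N]])
    show "xs [l0,m0,linv l0] \<in> {0<..<1}" by (rule inr[OF w3_Psi[OF l0L m0N linv_Nb[OF l0L m0N]]])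
    show "\<forall>\<psi>\<in>Psi n. type1 \<psi> \<longrightarrow> xs \<psi> = xs [l0,l0]"
    proof (intro ballI impI)
      fix \<psi> assume "\<psi> \<in> Psi n" "type1 \<psi>"
      then obtain l where "l \<in> LL n" "\<psi> = [l,l]" using tc1 by blast
      then show "xs \<psi> = xs [l0,l0]" using type1v l0L by simp
    qed
    show "\<forall>\<psi>\<in>Psi n. (type2 \<psi> \<or> type3 \<psi> \<or> type5 \<psi>) \<longrightarrow> xs \<psi> = xs [l0,m0,m0]"
    proof (intro ballI impI)
      fix \<psi> assume "\<psi> \<in> Psi n" "type2 \<psi> \<or> type3 \<psi> \<or> type5 \<psi>"
      then have "(\<exists>l\<in>LL n. \<exists>m\<in>Nb n l. \<psi> = [l,m,m]) \<or> (\<exists>l\<in>LL n. \<exists>m\<in>Nb n l. \<exists>k\<in>Nb n m. k \<noteq> linv l \<and> \<psi> = [l,m,k])"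
        by (rule tc235)
      then have "xs \<psi> = \<beta>s" using type2v type35v by blast
      then show "xs \<psi> = xs [l0,m0,m0]" using type2v[OF l0L m0N] by simp
    qed
    show "\<forall>\<psi>\<in>Psi n. type4 \<psi> \<longrightarrow> xs \<psi> = xs [l0,m0,linv l0]"
    proof (intro ballI impI)
      fix \<psi> assume "\<psi> \<in> Psi n" "type4 \<psi>"
      then obtain l m where "l \<in> LL n" "m \<in> Nb n l" "\<psi> = [l,m,linv l]" using tc4 by blast
      then show "xs \<psi> = xs [l0,m0,linv l0]" using type4v l0L m0N by simp
    qed
  qed
qed

end
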